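(* For all automata $A$ and $B$: $A\le_F B$ if and only if there exists an automaton $C$ with $A\le_H C$ and $C\le_R B$.
   Context: An automaton $A$ consists of a set $\mathrm{states}(A)$ of states, a nonempty set $\mathrm{start}(A)\subseteq\mathrm{states}(A)$ of start states, a set $\mathrm{acts}(A)$ of actions containing a distinguished internal action $\tau$, and a set $\mathrm{steps}(A)\subseteq\mathrm{states}(A)\times\mathrm{acts}(A)\times\mathrm{states}(A)$ of steps; write $s\xrightarrow{a}_A t$ for $(s,a,t)\in\mathrm{steps}(A)$. For a relation $R$ write $R[s]=\{u\mid (s,u)\in R\}$. A step refinement from $A$ to $B$ is a partial function $r:\mathrm{states}(A)\rightharpoonup\mathrm{states}(B)$ such that (1) if $s\in\mathrm{start}(A)$ then $s\in\mathrm{dom}(r)$ and $r(s)\in\mathrm{start}(B)$; (2) if $s\xrightarrow{a}_A t$ and $s\in\mathrm{dom}(r)$ then $t\in\mathrm{dom}(r)$ and either $r(s)=r(t)$ and $a=\tau$, or $r(s)\xrightarrow{a}_B r(t)$. Write $A\le_R B$ if one exists. A normed forward simulation from $A$ to $B$ is a pair $(f,n)$ where $f\subseteq\mathrm{states}(A)\times\mathrm{states}(B)$ and $n:\mathrm{steps}(A)\times\mathrm{states}(B)\to S$ for some set $S$ with a well-founded strict order $<$, such that: (1) if $s\in\mathrm{start}(A)$ then $f[s]\cap\mathrm{start}(B)\neq\emptyset$; (2) if $s\xrightarrow{a}_A t$ and $u\in f[s]$ then (a) $u\in f[t]$ and $a=\tau$, or (b) there is $v\in f[t]$ with $u\xrightarrow{a}_B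 v$, or (c) there is $v\in f[s]$ with $u\xrightarrow{\tau}_B v$ and $n(s\xrightarrow{a}t,v)<n(s\xrightarrow{a}t,u)$. Write $A\le_F B$ if one exists. A normed history relation from $A$ to $B$ is a pair $(r,n)$ such that $r$ is a step refinement from $B$ to $A$ and $(r^{-1},n)$ is a normed forward simulation from $A$ to $B$. Write $A\le_H B$ if one exists. *)

theory Defs
  imports Main
begin

record ('s, 'a) automaton =
  states :: "'s set"
  start :: "'s set"
  acts :: "'a set"
  steps :: "('s \<times> 'a \<times> 's) set"

text \<open>The distinguished internal action is a fixed element tau of the action type,
  shared by all automata under consideration.\<close>

definition is_automaton :: "'a \<Rightarrow> ('s, 'a) automaton \<Rightarrow> bool" where
  "is_automaton tau A \<longleftrightarrow>
     start A \<subseteq> states A \<and> start A \<noteq> {} \<and> tau \<in> acts A \<and>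
     steps A \<subseteq> states A \<times> acts A \<times> states A"

definition step_refinement ::
  "'a \<Rightarrow> ('s, 'a) automaton \<Rightarrow> ('t, 'a) automaton \<Rightarrow> ('s \<Rightarrow> 't option) \<Rightarrow> bool" where
  "step_refinement tau A B r \<longleftrightarrow>
     dom r \<subseteq> states A \<and> ran r \<subseteq> states B \<and>
     (\<forall>s \<in> start A. s \<in> dom r \<and> the (r s) \<in> start B) \<and>
     (\<forall>s a t. (s, a, t) \<in> steps A \<and> s \<in> dom r \<longrightarrow>
        t \<in> dom r \<and>
        ((the (r s) = the (r t) \<and> a = tau) \<or> (the (r s), a, the (r t)) \<in> steps B))"

definition refines_R :: "'a \<Rightarrow> ('s, 'a) automaton \<Rightarrow> ('t, 'a) automaton \<Rightarrow> bool" where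
  "refines_R tau A B \<longleftrightarrow> (\<exists>r. step_refinement tau A B r)"

definition normed_forward_sim ::
  "'a \<Rightarrow> ('s, 'a) automaton \<Rightarrow> ('t, 'a) automaton \<Rightarrow> ('s \<times> 't) set
    \<Rightarrow> ('s \<times> 'a \<times> 's \<Rightarrow> 't \<Rightarrow> 'n) \<Rightarrow> 'n set \<Rightarrow> ('n \<times> 'n) set \<Rightarrow> bool" where
  "normed_forward_sim tau A B f n S R \<longleftrightarrow>
     f \<subseteq> states A \<times> states B \<and>
     R \<subseteq> S \<times> S \<and> wf R \<and> trans R \<and>
     (\<forall>st \<in> steps A. \<forall>u \<in> states B. n st u \<in> S) \<and>
     (\<forall>s \<in> start A. f `` {s} \<inter> start B \<noteq> {}) \<and>
     (\<forall>s a t u. (s, a, t) \<in> steps A \<and> u \<in> f `` {s} \<longrightarrow>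
        (u \<in> f `` {t} \<and> a = tau) \<or>
        (\<exists>v \<in> f `` {t}. (u, a, v) \<in> steps B) \<or>
        (\<exists>v \<in> f `` {s}. (u, tau, v) \<in> steps B \<and> (n (s, a, t) v, n (s, a, t) u) \<in> R))"

text \<open>The norm set S is taken inside the type steps(A) x states(B); this loses
  no generality since any norm can be pulled back along n (inverse image of a
  well-founded strict order is a well-founded strict order).\<close>
definition refines_F :: "'a \<Rightarrow> ('s, 'a) automaton \<Rightarrow> ('t, 'a) automaton \<Rightarrow> bool" where
  "refines_F tau A B \<longleftrightarrow>
     (\<exists>f (n :: 's \<times> 'a \<times> 's \<Rightarrow> 't \<Rightarrow> ('s \<times> 'a \<times> 's) \<times> 't) S R.
        normed_forward_sim tau A B f n S R)"

definition normed_history_rel ::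
  "'a \<Rightarrow> ('s, 'a) automaton \<Rightarrow> ('t, 'a) automaton \<Rightarrow> ('t \<Rightarrow> 's option)
    \<Rightarrow> ('s \<times> 'a \<times> 's \<Rightarrow> 't \<Rightarrow> 'n) \<Rightarrow> 'n set \<Rightarrow> ('n \<times> 'n) set \<Rightarrow> bool" where
  "normed_history_rel tau A B r n S R \<longleftrightarrow>
     step_refinement tau B A r \<and>
     normed_forward_sim tau A B {(s, u). r u = Some s} n S R"

definition refines_H :: "'a \<Rightarrow> ('s, 'a) automaton \<Rightarrow> ('t, 'a) automaton \<Rightarrow> bool" where
  "refines_H tau A B \<longleftrightarrow>
     (\<exists>r (n :: 's \<times> 'a \<times> 's \<Rightarrow> 't \<Rightarrow> ('s \<times> 'a \<times> 's) \<times> 't) S R.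
        normed_history_rel tau A B r n S R)"

end

theory Submission
  imports Defs
begin

definition good :: "'a \<Rightarrow> ('s \<times> 't) set \<Rightarrow> ('t, 'a) automaton \<Rightarrow> 's \<times> 'a \<times> 's \<Rightarrow> 't \<Rightarrow> bool" where
  "good tau f B st u \<longleftrightarrow>
     (u \<in> f `` {snd (snd st)} \<and> fst (snd st) = tau) \<or>
     (\<exists>v \<in> f `` {snd (snd st)}. (u, fst (snd st), v) \<in> steps B)"

fun reach :: "'a \<Rightarrow> ('s \<times> 't) set \<Rightarrow> ('t, 'a) automaton \<Rightarrow> 's \<times> 'a \<times> 's \<Rightarrow> nat \<Rightarrow> 't \<Rightarrow> bool" where
  "reach tau f B st 0 u = (u \<in> f `` {fst st} \<and> good tau f B st u)"
| "reach tau f B st (Suc k) u = (u \<in> f `` {fst st} \<and> (good tau f B st u \<or>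
      (\<exists>v. (u, tau, v) \<in> steps B \<and> reach tau f B st k v)))"

lemma reach_mem: "reach tau f B st k u \<Longrightarrow> u \<in> f `` {fst st}"
  by (cases k) auto

lemma reach_mono: "reach tau f B st k u \<Longrightarrow> reach tau f B st (Suc k) u"
  by (induction k arbitrary: u) auto

lemma sim_of_reach:
  assumes fs: "f \<subseteq> states A \<times> states B"
    and st: "\<forall>s\<in>start A. f `` {s} \<inter> start B \<noteq> {}"
    and rc: "\<forall>st\<in>steps A. \<forall>u\<in>f `` {fst st}. \<exists>k. reach tau f B st k u"
  shows "\<exists>(n :: 's \<times> 'a \<times> 's \<Rightarrow> 't \<Rightarrow> ('s \<times> 'a \<times> 's) \<times> 't) S R.
           normed_forward_sim tau A B f n S R"
proof -
  define d where "d st u = (LEAST k. reach tau f B st k u)" for st u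
  define R :: "(('s \<times> 'a \<times> 's) \<times> 't) rel" where "R = inv_image less_than (\<lambda>(st, u). d st u)"
  have "normed_forward_sim tau A B f (\<lambda>st u. (st, u)) UNIV R"
    unfolding normed_forward_sim_def
  proof (intro conjI allI impI)
    show "wf R" unfolding R_def by (rule wf_inv_image) simp
    show "trans R" unfolding R_def by (rule trans_inv_image) (simp add: trans_less_than)
  next
    fix s a t u
    assume h: "(s, a, t) \<in> steps A \<and> u \<in> f `` {s}"
    show "(u \<in> f `` {t} \<and> a = tau) \<or>
        (\<exists>v \<in> f `` {t}. (u, a, v) \<in> steps B) \<or>
        (\<exists>v \<in> f `` {s}. (u, tau, v) \<in> steps B \<and> (((s, a, t), v), ((s, a, t), u)) \<in> R)"
    proof (cases "good tau f B (s, a, t) u")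
      case True
      then show ?thesis unfolding good_def by auto
    next
      case False
      from rc h obtain k where "reach tau f B (s, a, t) k u" by fastforce
      then have rm: "reach tau f B (s, a, t) (d (s, a, t) u) u"
        unfolding d_def by (rule LeastI)
      show ?thesis
      proof (cases "d (s, a, t) u")
        case 0
        with rm False show ?thesis by simp
      next
        case (Suc m)
        with rm False obtain v where v: "(u, tau, v) \<in> steps B" "reach tau f B (s, a, t) m v"
          by auto
        have "d (s, a, t) v \<le> m" unfolding d_def by (rule Least_le) (rule v(2))
        with Suc have "(((s, a, t), v), ((s, a, t), u)) \<in> R" unfolding R_def by simp
        moreover have "v \<in> f `` {s}" using reach_mem[OF v(2)] by simp
        ultimately show ?thesis using v(1) by blast
      qed
    qed
  qed (use fs st in auto)
  then show ?thesis by blast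
qed

lemma reach_of_sim:
  assumes sim: "normed_forward_sim tau A B f n S R"
    and stA: "st \<in> steps A" and u: "u \<in> f `` {fst st}"
  shows "\<exists>k. reach tau f B st k u"
proof -
  obtain s a t where st: "st = (s, a, t)" by (cases st) auto
  from sim have wfR: "wf R" unfolding normed_forward_sim_def by blast
  have "\<forall>u. n st u = x \<longrightarrow> u \<in> f `` {s} \<longrightarrow> (\<exists>k. reach tau f B st k u)" for x
    using wfR
  proof (induction x rule: wf_induct_rule)
    case (less x)
    show ?case
    proof (intro allI impI)
      fix u assume ux: "n st u = x" and uf: "u \<in> f `` {s}"
      from sim stA uf st have
        "(u \<in> f `` {t} \<and> a = tau) \<or>
        (\<exists>v \<in> f `` {t}. (u, a, v) \<in> steps B) \<or>
        (\<exists>v \<in> f `` {s}. (u, tau, v) \<in> steps B \<and> (n (s, a, t) v, n (s, a, t) u) \<in> R)"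
        unfolding normed_forward_sim_def by blast
      then show "\<exists>k. reach tau f B st k u"
      proof (elim disjE)
        assume "u \<in> f `` {t} \<and> a = tau"
        then have "reach tau f B st 0 u" using uf st by (simp add: good_def)
        then show ?thesis by blast
      next
        assume "\<exists>v \<in> f `` {t}. (u, a, v) \<in> steps B"
        then have "reach tau f B st 0 u" using uf st by (auto simp add: good_def)
        then show ?thesis by blast
      next
        assume "\<exists>v \<in> f `` {s}. (u, tau, v) \<in> steps B \<and> (n (s, a, t) v, n (s, a, t) u) \<in> R"
        then obtain v where v: "v \<in> f `` {s}" "(u, tau, v) \<in> steps B" "(n st v, x) \<in> R"
          using ux st by blast
        from less[OF v(3)] v(1) obtain k where "reach tau f B st k v" by blast
        then have "reach tau f B st (Suc k) u" using v(2) uf st by auto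
        then show ?thesis by blast
      qed
    qed
  qed
  with u st show ?thesis by simp
qed

lemma compose:
  fixes A :: "('s, 'a) automaton" and C :: "('c, 'a) automaton" and B :: "('t, 'a) automaton"
  assumes H: "refines_H tau A C" and RR: "refines_R tau C B"
  shows "refines_F tau A B"
proof -
  from H obtain r and n :: "'s \<times> 'a \<times> 's \<Rightarrow> 'c \<Rightarrow> ('s \<times> 'a \<times> 's) \<times> 'c" and S R where hr: "normed_history_rel tau A C r n S R"
    unfolding refines_H_def by blast
  from RR obtain g where g: "step_refinement tau C B g" unfolding refines_R_def by blast
  from hr have rr: "step_refinement tau C A r"
    and sim: "normed_forward_sim tau A C {(s, u). r u = Some s} n S R"
    unfolding normed_history_rel_def by auto
  define f1 where "f1 = {(s, u). r u = Some s}"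
  define fB where "fB = {(s, v). \<exists>u. r u = Some s \<and> g u = Some v}"
  have gt: "good tau f1 C st u \<Longrightarrow> g u = Some v \<Longrightarrow> good tau fB B st v" for st u v
  proof -
    assume gd: "good tau f1 C st u" and gv: "g u = Some v"
    obtain s a t where st: "st = (s, a, t)" by (cases st) auto
    from gd st have "(u \<in> f1 `` {t} \<and> a = tau) \<or> (\<exists>w \<in> f1 `` {t}. (u, a, w) \<in> steps C)"
      unfolding good_def by simp
    then have "(v \<in> fB `` {t} \<and> a = tau) \<or> (\<exists>v' \<in> fB `` {t}. (v, a, v') \<in> steps B)"
    proof
      assume "u \<in> f1 `` {t} \<and> a = tau"
      then show ?thesis using gv unfolding f1_def fB_def by auto
    next
      assume "\<exists>w \<in> f1 `` {t}. (u, a, w) \<in> steps C"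
      then obtain w where w: "r w = Some t" "(u, a, w) \<in> steps C" unfolding f1_def by auto
      from g w(2) gv obtain x where x: "g w = Some x"
        "(the (g u) = the (g w) \<and> a = tau) \<or> (the (g u), a, the (g w)) \<in> steps B"
        unfolding step_refinement_def by blast
      then show ?thesis using gv w(1) unfolding fB_def by auto
    qed
    then show ?thesis using st unfolding good_def by simp
  qed
  have key: "reach tau f1 C st k u \<Longrightarrow> g u = Some v \<Longrightarrow> reach tau fB B st k v" for st k u v
  proof (induction k arbitrary: u v)
    case 0
    obtain s a t where st: "st = (s, a, t)" by (cases st) auto
    from 0 st have uf: "r u = Some s" unfolding f1_def by simp
    have vf: "v \<in> fB `` {s}" using uf 0(2) unfolding fB_def by auto
    from 0 gt[of st u v] vf st show ?case by simp
  next
    case (Suc k)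
    obtain s a t where st: "st = (s, a, t)" by (cases st) auto
    from Suc.prems st have uf: "r u = Some s" unfolding f1_def by simp
    have vf: "v \<in> fB `` {s}" using uf Suc.prems(2) unfolding fB_def by auto
    from Suc.prems(1) have "good tau f1 C st u \<or> (\<exists>w. (u, tau, w) \<in> steps C \<and> reach tau f1 C st k w)"
      by simp
    then show ?case
    proof
      assume "good tau f1 C st u"
      then show ?case using gt Suc.prems(2) vf st by simp
    next
      assume "\<exists>w. (u, tau, w) \<in> steps C \<and> reach tau f1 C st k w"
      then obtain w where w: "(u, tau, w) \<in> steps C" "reach tau f1 C st k w" by blast
      from g w(1) Suc.prems(2) obtain x where x: "g w = Some x"
        "(the (g u) = the (g w)) \<or> (the (g u), tau, the (g w)) \<in> steps B"
        unfolding step_refinement_def by blast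
      from Suc.IH[OF w(2) x(1)] have rx: "reach tau fB B st k x" .
      from x(2) show ?case
      proof
        assume "the (g u) = the (g w)"
        then have "x = v" using x(1) Suc.prems(2) by simp
        with reach_mono[OF rx] show ?case by (simp only:)
      next
        assume "(the (g u), tau, the (g w)) \<in> steps B"
        then show ?case using rx vf st x(1) Suc.prems(2) by auto
      qed
    qed
  qed
  have fs: "fB \<subseteq> states A \<times> states B"
  proof
    fix p assume "p \<in> fB"
    then obtain s v u where p: "p = (s, v)" "r u = Some s" "g u = Some v" unfolding fB_def by auto
    from rr p(2) have "s \<in> states A" unfolding step_refinement_def ran_def by blast
    moreover from g p(3) have "v \<in> states B" unfolding step_refinement_def ran_def by blast
    ultimately show "p \<in> states A \<times> states B" using p(1) by simp
  qed
  have stt: "\<forall>s\<in>start A. fB `` {s} \<inter> start B \<noteq> {}"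
  proof
    fix s assume s: "s \<in> start A"
    with sim obtain u where u: "r u = Some s" "u \<in> start C"
      unfolding normed_forward_sim_def by blast
    from g u(2) obtain v where v: "g u = Some v" "v \<in> start B"
      unfolding step_refinement_def by fastforce
    from u v show "fB `` {s} \<inter> start B \<noteq> {}" unfolding fB_def by blast
  qed
  have rc: "\<forall>st\<in>steps A. \<forall>v\<in>fB `` {fst st}. \<exists>k. reach tau fB B st k v"
  proof (intro ballI)
    fix st v assume st: "st \<in> steps A" and v: "v \<in> fB `` {fst st}"
    then obtain u where u: "r u = Some (fst st)" "g u = Some v" unfolding fB_def by auto
    from reach_of_sim[OF sim st] u(1) obtain k where "reach tau f1 C st k u"
      unfolding f1_def by auto
    from key[OF this u(2)] show "\<exists>k. reach tau fB B st k v" by blast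
  qed
  from sim_of_reach[OF fs stt rc] show ?thesis unfolding refines_F_def by blast
qed

definition mkC :: "'a \<Rightarrow> ('s, 'a) automaton \<Rightarrow> ('t, 'a) automaton \<Rightarrow> ('s \<times> 't) set
   \<Rightarrow> ('s \<times> 't, 'a) automaton" where
  "mkC tau A B f = \<lparr> states = f,
     start = {p \<in> f. fst p \<in> start A \<and> snd p \<in> start B},
     acts = acts B,
     steps = {((s, u), a, (t, v)) | s u a t v. (s, a, t) \<in> steps A \<and> (u, a, v) \<in> steps B \<and> (s, u) \<in> f \<and> (t, v) \<in> f}
       \<union> {((s, u), tau, (t, u)) | s u t. (s, tau, t) \<in> steps A \<and> (s, u) \<in> f \<and> (t, u) \<in> f}
       \<union> {((s, u), tau, (s, v)) | s u v. (u, tau, v) \<in> steps B \<and> (s, u) \<in> f \<and> (s, v) \<in> f} \<rparr>"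

lemma construct:
  fixes A :: "('s, 'a) automaton" and B :: "('t, 'a) automaton"
  assumes aA: "is_automaton tau A" and aB: "is_automaton tau B"
    and F: "refines_F tau A B"
  shows "\<exists>C :: ('s \<times> 't, 'a) automaton. is_automaton tau C \<and> refines_H tau A C \<and> refines_R tau C B"
proof -
  from F obtain f and n :: "'s \<times> 'a \<times> 's \<Rightarrow> 't \<Rightarrow> ('s \<times> 'a \<times> 's) \<times> 't" and S R where sim: "normed_forward_sim tau A B f n S R"
    unfolding refines_F_def by blast
  from sim have fs: "f \<subseteq> states A \<times> states B"
    and stt: "\<forall>s\<in>start A. f `` {s} \<inter> start B \<noteq> {}"
    unfolding normed_forward_sim_def by auto
  define C where "C = mkC tau A B f"
  have aC: "is_automaton tau C"
    unfolding is_automaton_def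
  proof (intro conjI)
    show "start C \<subseteq> states C" unfolding C_def mkC_def by auto
    from aA obtain s where s: "s \<in> start A" unfolding is_automaton_def by blast
    with stt obtain u where "(s, u) \<in> f" "u \<in> start B" by blast
    with s show "start C \<noteq> {}" unfolding C_def mkC_def by auto
    show "tau \<in> acts C" using aB unfolding C_def mkC_def is_automaton_def by simp
    show "steps C \<subseteq> states C \<times> acts C \<times> states C"
      using aB unfolding C_def mkC_def is_automaton_def by auto
  qed
  define r where "r p = (if p \<in> f then Some (fst p) else None)" for p :: "'s \<times> 't"
  define g where "g p = (if p \<in> f then Some (snd p) else None)" for p :: "'s \<times> 't"
  define fC where "fC = {(s, p). r p = Some s}"
  have fC_iff: "(s, p) \<in> fC \<longleftrightarrow> p \<in> f \<and> fst p = s" for s p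
    unfolding fC_def r_def by auto
  have rr: "step_refinement tau C A r"
    unfolding step_refinement_def
  proof (intro conjI)
    show "dom r \<subseteq> states C" unfolding r_def C_def mkC_def dom_def by auto
    show "ran r \<subseteq> states A" using fs unfolding r_def ran_def by auto
    show "\<forall>s\<in>start C. s \<in> dom r \<and> the (r s) \<in> start A"
      unfolding r_def C_def mkC_def by auto
    show "\<forall>s a t. (s, a, t) \<in> steps C \<and> s \<in> dom r \<longrightarrow> t \<in> dom r \<and>
        (the (r s) = the (r t) \<and> a = tau \<or> (the (r s), a, the (r t)) \<in> steps A)"
      unfolding r_def C_def mkC_def by auto
  qed
  have gg: "step_refinement tau C B g"
    unfolding step_refinement_def
  proof (intro conjI)
    show "dom g \<subseteq> states C" unfolding g_def C_def mkC_def dom_def by auto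
    show "ran g \<subseteq> states B" using fs unfolding g_def ran_def by auto
    show "\<forall>s\<in>start C. s \<in> dom g \<and> the (g s) \<in> start B"
      unfolding g_def C_def mkC_def by auto
    show "\<forall>s a t. (s, a, t) \<in> steps C \<and> s \<in> dom g \<longrightarrow> t \<in> dom g \<and>
        (the (g s) = the (g t) \<and> a = tau \<or> (the (g s), a, the (g t)) \<in> steps B)"
      unfolding g_def C_def mkC_def by auto
  qed
  have gtr: "good tau fC C st (fst st, u)"
    if st0: "st \<in> steps A" and uf0: "(fst st, u) \<in> f" and gd0: "good tau f B st u" for st u
  proof -
    obtain s a t where st: "st = (s, a, t)" by (cases st) auto
    from uf0 st have uf: "(s, u) \<in> f" by simp
    from gd0 st have gd: "good tau f B (s, a, t) u" by simp
    from gd have "good tau fC C (s, a, t) (s, u)"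
      unfolding good_def
    proof (elim disjE)
      assume "u \<in> f `` {snd (snd (s, a, t))} \<and> fst (snd (s, a, t)) = tau"
      then have "((s, u), tau, (t, u)) \<in> steps C" "(t, (t, u)) \<in> fC" "a = tau"
        using uf st0 st unfolding C_def mkC_def fC_iff by auto
      then show "((s, u) \<in> fC `` {snd (snd (s, a, t))} \<and> fst (snd (s, a, t)) = tau) \<or>
          (\<exists>v \<in> fC `` {snd (snd (s, a, t))}. ((s, u), fst (snd (s, a, t)), v) \<in> steps C)"
        by auto
    next
      assume "\<exists>v \<in> f `` {snd (snd (s, a, t))}. (u, fst (snd (s, a, t)), v) \<in> steps B"
      then obtain v where v: "(t, v) \<in> f" "(u, a, v) \<in> steps B" by auto
      then have "((s, u), a, (t, v)) \<in> steps C" "(t, (t, v)) \<in> fC"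
        using uf st0 st unfolding C_def mkC_def fC_iff by auto
      then show "((s, u) \<in> fC `` {snd (snd (s, a, t))} \<and> fst (snd (s, a, t)) = tau) \<or>
          (\<exists>v \<in> fC `` {snd (snd (s, a, t))}. ((s, u), fst (snd (s, a, t)), v) \<in> steps C)"
        by auto
    qed
    with st show ?thesis by simp
  qed
  have tr: "st \<in> steps A \<Longrightarrow> reach tau f B st k u \<Longrightarrow> reach tau fC C st k (fst st, u)" for st k u
  proof (induction k arbitrary: u)
    case 0
    from 0 have uf: "(fst st, u) \<in> f" and gd: "good tau f B st u" by auto
    from gtr[OF 0(1) uf gd] uf show ?case by (simp add: fC_iff)
  next
    case (Suc k)
    obtain s a t where st: "st = (s, a, t)" by (cases st) auto
    from Suc.prems st have uf: "(s, u) \<in> f" by auto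
    from Suc.prems(2) have "good tau f B st u \<or> (\<exists>v. (u, tau, v) \<in> steps B \<and> reach tau f B st k v)"
      by simp
    then show ?case
    proof
      assume "good tau f B st u"
      from gtr[OF Suc.prems(1) _ this] uf st show ?case by (simp add: fC_iff)
    next
      assume "\<exists>v. (u, tau, v) \<in> steps B \<and> reach tau f B st k v"
      then obtain v where v: "(u, tau, v) \<in> steps B" "reach tau f B st k v" by blast
      from reach_mem[OF v(2)] st have vf: "(s, v) \<in> f" by auto
      have "((s, u), tau, (s, v)) \<in> steps C" using v(1) uf vf unfolding C_def mkC_def by auto
      with Suc.IH[OF Suc.prems(1) v(2)] uf st show ?case by (auto simp: fC_iff)
    qed
  qed
  have rcC: "\<forall>st\<in>steps A. \<forall>p\<in>fC `` {fst st}. \<exists>k. reach tau fC C st k p"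
  proof (intro ballI)
    fix st p assume st: "st \<in> steps A" and p: "p \<in> fC `` {fst st}"
    then obtain u where p': "p = (fst st, u)" "(fst st, u) \<in> f" by (cases p) (auto simp: fC_iff)
    from reach_of_sim[OF sim st] p' obtain k where "reach tau f B st k u" by auto
    from tr[OF st this] p'(1) show "\<exists>k. reach tau fC C st k p" by blast
  qed
  have fsC: "fC \<subseteq> states A \<times> states C"
    using fs unfolding C_def mkC_def by (auto simp: fC_iff)
  have sttC: "\<forall>s\<in>start A. fC `` {s} \<inter> start C \<noteq> {}"
  proof
    fix s assume s: "s \<in> start A"
    with stt obtain u where "(s, u) \<in> f" "u \<in> start B" by blast
    with s have "(s, u) \<in> fC `` {s} \<inter> start C" unfolding C_def mkC_def by (auto simp: fC_iff)
    then show "fC `` {s} \<inter> start C \<noteq> {}" by blast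
  qed
  from sim_of_reach[OF fsC sttC rcC] obtain nC :: "'s \<times> 'a \<times> 's \<Rightarrow> 's \<times> 't \<Rightarrow> ('s \<times> 'a \<times> 's) \<times> ('s \<times> 't)" and SC RC where
    "normed_forward_sim tau A C fC nC SC RC" by blast
  with rr have "refines_H tau A C"
    unfolding refines_H_def normed_history_rel_def fC_def by blast
  moreover have "refines_R tau C B" using gg unfolding refines_R_def by blast
  ultimately show ?thesis using aC by blast
qed

theorem mainTheorem16:
  fixes tau :: 'a
    and A :: "('s, 'a) automaton"
    and B :: "('t, 'a) automaton"
  assumes "is_automaton tau A" and "is_automaton tau B"
  shows "(refines_F tau A B \<longleftrightarrow>
           (\<exists>C :: ('s \<times> 't, 'a) automaton. is_automaton tau C \<and>
              refines_H tau A C \<and> refines_R tau C B))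
       \<and> (\<forall>C :: ('c, 'a) automaton. is_automaton tau C \<and>
              refines_H tau A C \<and> refines_R tau C B \<longrightarrow> refines_F tau A B)"
proof (intro conjI iffI allI impI)
  assume "refines_F tau A B"
  from construct[OF assms this] show "\<exists>C :: ('s \<times> 't, 'a) automaton. is_automaton tau C \<and>
              refines_H tau A C \<and> refines_R tau C B" .
next
  assume "\<exists>C :: ('s \<times> 't, 'a) automaton. is_automaton tau C \<and>
              refines_H tau A C \<and> refines_R tau C B"
  then obtain C :: "('s \<times> 't, 'a) automaton" where "refines_H tau A C" "refines_R tau C B" by blast
  from compose[OF this] show "refines_F tau A B" .
next
  fix C :: "('c, 'a) automaton"
  assume "is_automaton tau C \<and> refines_H tau A C \<and> refines_R tau C B"
  then have "refines_H tau A C" "refines_R tau C B" by auto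
  from compose[OF this] show "refines_F tau A B" .
qed

end
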